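(* Consider the plant $\dot x=f(x,u,w)$ with $x\in\mathbb{R}^n$, $u\in\mathbb{R}^p$, $w\in\mathbb{R}^q$, in closed loop with the state feedback $u=\mathsf{N}(x)$, i.e. $\dot x=f^{\mathrm{cl}}(x,w):=f(x,\mathsf{N}(x),w)$. Let $\mathcal{X}_0\subseteq[\underline{x}_0,\overline{x}_0]$ and $\mathcal{W}\subseteq[\underline{w},\overline{w}]$. Let $\mathsf{F}$ be a decomposition function for $f$, and let $\underline{A},\overline{A},\underline{b},\overline{b}$ and the induced maps $\underline{\mathsf{G}}_{[a,\widehat a]},\overline{\mathsf{G}}_{[a,\widehat a]},\underline{\mathsf{H}},\overline{\mathsf{H}}$ be as in the context. For $s\in\{\mathrm{G},\mathrm{H},\mathrm{L}\}$ consider the embedding system on pairs $(x,\widehat{x})$ defined, for each $i\in\{1,\dots,n\}$, by: - $s=\mathrm{G}$: $\dot x_i=\mathsf{F}_i(x,\widehat{x},\underline{\mathsf{H}}(x,\widehat{x}),\overline{\mathsf{H}}(x,\widehat{x}),\underline{w},\overline{w})$, $\dot{\widehat{x}}_i=\mathsf{F}_i(\widehat{x},x,\overline{\mathsf{H}}(x,\widehat{x}),\underline{\mathsf{H}}(x,\widehat{x}),\overline{w},\underline{w})$; - $s=\mathrm{H}$: $\dot x_i=\mathsf{F}_i(x,\widehat{x},\underline{\mathsf{G}}_{[x,\widehat{x}]}(x,\widehat{x}_{[i:x]}),\overline{\mathsf{G}}_{[x,\widehat{x}]}(x,\widehat{x}_{[i:x]}),\underline{w},\overline{w})$, $\dot{\widehat{x}}_i=\mathsf{F}_i(\widehat{x},x,\overline{\mathsf{G}}_{[x,\widehat{x}]}(x_{[i:\widehat{x}]},\widehat{x}),\underline{\mathsf{G}}_{[x,\widehat{x}]}(x_{[i:\widehat{x}]},\widehat{x}),\overline{w},\underline{w})$;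 - $s=\mathrm{L}$: $\dot x_i=\mathsf{F}_i(x,\widehat{x},\underline{\mathsf{H}}(x,\widehat{x}_{[i:x]}),\overline{\mathsf{H}}(x,\widehat{x}_{[i:x]}),\underline{w},\overline{w})$, $\dot{\widehat{x}}_i=\mathsf{F}_i(\widehat{x},x,\overline{\mathsf{H}}(x_{[i:\widehat{x}]},\widehat{x}),\underline{\mathsf{H}}(x_{[i:\widehat{x}]},\widehat{x}),\overline{w},\underline{w})$. Let $t\mapsto(\underline{x}^s(t),\overline{x}^s(t))$ be the solution of the $s$-embedding system with initial condition $(\underline{x}_0,\overline{x}_0)$, assumed to exist for all $t\ge0$ with $\underline{x}^s(t)\le\overline{x}^s(t)$. Then for every $s\in\{\mathrm{G},\mathrm{H},\mathrm{L}\}$ and every $t\ge0$, $$\mathcal{R}_{f^{\mathrm{cl}}}(t,0,\mathcal{X}_0,\mathcal{W})\subseteq[\underline{x}^s(t),\overline{x}^s(t)].$$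
   Context: Vector inequalities are componentwise; $[x,y]=\{z:x\le z\le y\}$; $\mathcal{T}^{2n}_{\ge0}=\{(x,\widehat x):x\le\widehat x\}$, $\mathcal{T}^{2n}_{\le0}=\{(x,\widehat x):x\ge\widehat x\}$, $\mathcal{T}^{2n}=\mathcal{T}^{2n}_{\ge0}\cup\mathcal{T}^{2n}_{\le0}$. For $v,w\in\mathbb{R}^n$, $v_{[i:w]}$ is the vector equal to $v$ except that its $i$-th entry is $w_i$. For a matrix $M$, $[M]^+=\max(M,0)$, $[M]^-=\min(M,0)$ entrywise. $f$ is locally Lipschitz. The reachable set is $\mathcal{R}_{f^{\mathrm{cl}}}(t,0,\mathcal{X}_0,\mathcal{W})=\{\phi(t,0,x_0,w(\cdot)): x_0\in\mathcal{X}_0,\ w:\mathbb{R}_{\ge0}\to\mathcal{W}\text{ piecewise continuous}\}$, where $\phi$ denotes the trajectory of $\dot x=f^{\mathrm{cl}}(x,w(t))$ (assumed to exist for all $t\ge0$). A decomposition function for $f$ is a locally Lipschitz $\mathsf{F}:\mathcal{T}^{2n}\times\mathcal{T}^{2p}\times\mathcal{T}^{2q}\to\mathbb{R}^n$ such that: (i) $\mathsf{F}(x,x,u,u,w,w)=f(x,u,w)$ for all $x,u,w$; (ii) $\mathsf{F}_i(x,\widehat x,u,\widehat u,w,\widehat w)\le\mathsf{F}_i(y,\widehat y,u,\widehat u,w,\widehat w)$ whenever $x\le y$, $x_i=y_i$ and $\widehat y\le\widehat x$; (iii) $\mathsf{F}_i(x,\widehat x,u,\widehat u,w,\widehat w)\le\mathsf{F}_i(x,\widehat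 x,v,\widehat v,w,\widehat w)$ whenever $u\le v$, $\widehat v\le\widehat u$, and likewise $\mathsf{F}_i(x,\widehat x,u,\widehat u,w,\widehat w)\le\mathsf{F}_i(x,\widehat x,u,\widehat u,\omega,\widehat\omega)$ whenever $w\le\omega$, $\widehat\omega\le\widehat w$. Neural network bounds: $\underline{A},\overline{A}:\mathcal{T}^{2n}_{\ge0}\to\mathbb{R}^{p\times n}$, $\underline{b},\overline{b}:\mathcal{T}^{2n}_{\ge0}\to\mathbb{R}^p$ are functions (e.g. produced by the CROWN algorithm) such that for all $a\le\widehat a$ and $z\in[a,\widehat a]$: $\underline{A}(a,\widehat a)z+\underline{b}(a,\widehat a)\le\mathsf{N}(z)\le\overline{A}(a,\widehat a)z+\overline{b}(a,\widehat a)$. For $a\le\widehat a$: $\underline{\mathsf{G}}_{[a,\widehat a]}(y,\widehat y)=[\underline{A}(a,\widehat a)]^+y+[\underline{A}(a,\widehat a)]^-\widehat y+\underline{b}(a,\widehat a)$, $\overline{\mathsf{G}}_{[a,\widehat a]}(y,\widehat y)=[\overline{A}(a,\widehat a)]^+\widehat y+[\overline{A}(a,\widehat a)]^-y+\overline{b}(a,\widehat a)$; and $\underline{\mathsf{H}}(y,\widehat y)=\underline{\mathsf{G}}_{[y,\widehat y]}(y,\widehat y)$, $\overline{\mathsf{H}}(y,\widehat y)=\overline{\mathsf{G}}_{[y,\widehat y]}(y,\widehat y)$. *)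

theory Defs
  imports "HOL-Analysis.Analysis"
begin

text \<open>Vectors are real^'n (componentwise order is the library order on vec).
  A p x n matrix is real^'n^'p.\<close>

definition loc_lipschitz_on :: "'a::metric_space set \<Rightarrow> ('a \<Rightarrow> 'b::metric_space) \<Rightarrow> bool" where
  "loc_lipschitz_on S g \<longleftrightarrow>
     (\<forall>z\<in>S. \<exists>e>0. \<exists>L. \<forall>a\<in>S \<inter> ball z e. \<forall>b\<in>S \<inter> ball z e. dist (g a) (g b) \<le> L * dist a b)"

definition vupd :: "real^'n \<Rightarrow> 'n \<Rightarrow> real^'n \<Rightarrow> real^'n" where
  "vupd v i w = (\<chi> j. if j = i then w $ i else v $ j)"

definition mat_pos :: "real^'n^'m \<Rightarrow> real^'n^'m" where
  "mat_pos M = (\<chi> i j. max (M $ i $ j) 0)"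

definition mat_neg :: "real^'n^'m \<Rightarrow> real^'n^'m" where
  "mat_neg M = (\<chi> i j. min (M $ i $ j) 0)"

definition T2 :: "('a::ord) \<Rightarrow> 'a \<Rightarrow> bool" where
  "T2 x xh \<longleftrightarrow> x \<le> xh \<or> xh \<le> x"

definition decomp_dom :: "real^'n \<Rightarrow> real^'n \<Rightarrow> real^'p \<Rightarrow> real^'p \<Rightarrow> real^'q \<Rightarrow> real^'q \<Rightarrow> bool" where
  "decomp_dom x xh u uh w wh \<longleftrightarrow> T2 x xh \<and> T2 u uh \<and> T2 w wh"

definition is_decomposition ::
  "(real^'n \<Rightarrow> real^'p \<Rightarrow> real^'q \<Rightarrow> real^'n) \<Rightarrow>
   (real^'n \<Rightarrow> real^'n \<Rightarrow> real^'p \<Rightarrow> real^'p \<Rightarrow> real^'q \<Rightarrow> real^'q \<Rightarrow> real^'n) \<Rightarrow> bool" where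
  "is_decomposition f F \<longleftrightarrow>
     loc_lipschitz_on {(x,xh,u,uh,w,wh). decomp_dom x xh u uh w wh}
       (\<lambda>(x,xh,u,uh,w,wh). F x xh u uh w wh)
   \<and> (\<forall>x u w. F x x u u w w = f x u w)
   \<and> (\<forall>i x xh y yh u uh w wh.
        decomp_dom x xh u uh w wh \<and> decomp_dom y yh u uh w wh \<and>
        x \<le> y \<and> x $ i = y $ i \<and> yh \<le> xh \<longrightarrow>
        F x xh u uh w wh $ i \<le> F y yh u uh w wh $ i)
   \<and> (\<forall>i x xh u uh v vh w wh.
        decomp_dom x xh u uh w wh \<and> decomp_dom x xh v vh w wh \<and>
        u \<le> v \<and> vh \<le> uh \<longrightarrow>
        F x xh u uh w wh $ i \<le> F x xh v vh w wh $ i)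
   \<and> (\<forall>i x xh u uh w wh om omh.
        decomp_dom x xh u uh w wh \<and> decomp_dom x xh u uh om omh \<and>
        w \<le> om \<and> omh \<le> wh \<longrightarrow>
        F x xh u uh w wh $ i \<le> F x xh u uh om omh $ i)"

definition nn_bounds ::
  "(real^'n \<Rightarrow> real^'p) \<Rightarrow> (real^'n \<Rightarrow> real^'n \<Rightarrow> real^'n^'p) \<Rightarrow> (real^'n \<Rightarrow> real^'n \<Rightarrow> real^'n^'p)
   \<Rightarrow> (real^'n \<Rightarrow> real^'n \<Rightarrow> real^'p) \<Rightarrow> (real^'n \<Rightarrow> real^'n \<Rightarrow> real^'p) \<Rightarrow> bool" where
  "nn_bounds N Al Ah bl bh \<longleftrightarrow>
     (\<forall>a ah z. a \<le> ah \<and> z \<in> {a..ah} \<longrightarrow>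
        Al a ah *v z + bl a ah \<le> N z \<and> N z \<le> Ah a ah *v z + bh a ah)"

definition Glo :: "(real^'n \<Rightarrow> real^'n \<Rightarrow> real^'n^'p) \<Rightarrow> (real^'n \<Rightarrow> real^'n \<Rightarrow> real^'p)
   \<Rightarrow> real^'n \<Rightarrow> real^'n \<Rightarrow> real^'n \<Rightarrow> real^'n \<Rightarrow> real^'p" where
  "Glo Al bl a ah y yh = mat_pos (Al a ah) *v y + mat_neg (Al a ah) *v yh + bl a ah"

definition Ghi :: "(real^'n \<Rightarrow> real^'n \<Rightarrow> real^'n^'p) \<Rightarrow> (real^'n \<Rightarrow> real^'n \<Rightarrow> real^'p)
   \<Rightarrow> real^'n \<Rightarrow> real^'n \<Rightarrow> real^'n \<Rightarrow> real^'n \<Rightarrow> real^'p" where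
  "Ghi Ah bh a ah y yh = mat_pos (Ah a ah) *v yh + mat_neg (Ah a ah) *v y + bh a ah"

definition Hlo :: "(real^'n \<Rightarrow> real^'n \<Rightarrow> real^'n^'p) \<Rightarrow> (real^'n \<Rightarrow> real^'n \<Rightarrow> real^'p)
   \<Rightarrow> real^'n \<Rightarrow> real^'n \<Rightarrow> real^'p" where
  "Hlo Al bl y yh = Glo Al bl y yh y yh"

definition Hhi :: "(real^'n \<Rightarrow> real^'n \<Rightarrow> real^'n^'p) \<Rightarrow> (real^'n \<Rightarrow> real^'n \<Rightarrow> real^'p)
   \<Rightarrow> real^'n \<Rightarrow> real^'n \<Rightarrow> real^'p" where
  "Hhi Ah bh y yh = Ghi Ah bh y yh y yh"

datatype emb_kind = EmbG | EmbH | EmbL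

definition emb_lo ::
  "(real^'n \<Rightarrow> real^'n \<Rightarrow> real^'p \<Rightarrow> real^'p \<Rightarrow> real^'q \<Rightarrow> real^'q \<Rightarrow> real^'n) \<Rightarrow>
   (real^'n \<Rightarrow> real^'n \<Rightarrow> real^'n^'p) \<Rightarrow> (real^'n \<Rightarrow> real^'n \<Rightarrow> real^'n^'p) \<Rightarrow>
   (real^'n \<Rightarrow> real^'n \<Rightarrow> real^'p) \<Rightarrow> (real^'n \<Rightarrow> real^'n \<Rightarrow> real^'p) \<Rightarrow>
   real^'q \<Rightarrow> real^'q \<Rightarrow> emb_kind \<Rightarrow> real^'n \<Rightarrow> real^'n \<Rightarrow> real^'n" where
  "emb_lo F Al Ah bl bh wl wh s x xh = (case s of
      EmbG \<Rightarrow> (\<chi> i. F x xh (Hlo Al bl x xh) (Hhi Ah bh x xh) wl wh $ i)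
    | EmbH \<Rightarrow> (\<chi> i. F x xh (Glo Al bl x xh x (vupd xh i x)) (Ghi Ah bh x xh x (vupd xh i x)) wl wh $ i)
    | EmbL \<Rightarrow> (\<chi> i. F x xh (Hlo Al bl x (vupd xh i x)) (Hhi Ah bh x (vupd xh i x)) wl wh $ i))"

definition emb_hi ::
  "(real^'n \<Rightarrow> real^'n \<Rightarrow> real^'p \<Rightarrow> real^'p \<Rightarrow> real^'q \<Rightarrow> real^'q \<Rightarrow> real^'n) \<Rightarrow>
   (real^'n \<Rightarrow> real^'n \<Rightarrow> real^'n^'p) \<Rightarrow> (real^'n \<Rightarrow> real^'n \<Rightarrow> real^'n^'p) \<Rightarrow>
   (real^'n \<Rightarrow> real^'n \<Rightarrow> real^'p) \<Rightarrow> (real^'n \<Rightarrow> real^'n \<Rightarrow> real^'p) \<Rightarrow>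
   real^'q \<Rightarrow> real^'q \<Rightarrow> emb_kind \<Rightarrow> real^'n \<Rightarrow> real^'n \<Rightarrow> real^'n" where
  "emb_hi F Al Ah bl bh wl wh s x xh = (case s of
      EmbG \<Rightarrow> (\<chi> i. F xh x (Hhi Ah bh x xh) (Hlo Al bl x xh) wh wl $ i)
    | EmbH \<Rightarrow> (\<chi> i. F xh x (Ghi Ah bh x xh (vupd x i xh) xh) (Glo Al bl x xh (vupd x i xh) xh) wh wl $ i)
    | EmbL \<Rightarrow> (\<chi> i. F xh x (Hhi Ah bh (vupd x i xh) xh) (Hlo Al bl (vupd x i xh) xh) wh wl $ i))"

definition piecewise_cont :: "(real \<Rightarrow> 'a::topological_space) \<Rightarrow> bool" where
  "piecewise_cont w \<longleftrightarrow>
     (\<forall>T\<ge>0. \<exists>S. finite S \<and> continuous_on ({0..T} - S) w \<and>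
        (\<forall>s\<in>S. (\<exists>l. (w \<longlongrightarrow> l) (at_left s)) \<and> (\<exists>l. (w \<longlongrightarrow> l) (at_right s))))"

text \<open>x is a (Caratheodory) trajectory of xdot = f(x, N x, w(t)) on [0,\<infinity>) from x0.\<close>
definition cl_traj :: "(real^'n \<Rightarrow> real^'p \<Rightarrow> real^'q \<Rightarrow> real^'n) \<Rightarrow> (real^'n \<Rightarrow> real^'p) \<Rightarrow>
    (real \<Rightarrow> real^'q) \<Rightarrow> real^'n \<Rightarrow> (real \<Rightarrow> real^'n) \<Rightarrow> bool" where
  "cl_traj f N w x0 x \<longleftrightarrow> x 0 = x0 \<and> continuous_on {0..} x \<and>
     (\<forall>t\<ge>0. ((\<lambda>s. f (x s) (N (x s)) (w s)) has_integral (x t - x0)) {0..t})"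

definition reach_set :: "(real^'n \<Rightarrow> real^'p \<Rightarrow> real^'q \<Rightarrow> real^'n) \<Rightarrow> (real^'n \<Rightarrow> real^'p) \<Rightarrow>
    real \<Rightarrow> (real^'n) set \<Rightarrow> (real^'q) set \<Rightarrow> (real^'n) set" where
  "reach_set f N t X0 W = {x t | x x0 w. x0 \<in> X0 \<and> piecewise_cont w \<and> (\<forall>s\<ge>0. w s \<in> W)
       \<and> cl_traj f N w x0 x}"

end

theory Submission
  imports Defs
begin


lemma loc_lip_compact:
  fixes g :: "'a::metric_space \<Rightarrow> 'b::metric_space"
  assumes "loc_lipschitz_on UNIV g" "compact K"
  obtains L where "L-lipschitz_on K g"
proof -
  have ll: "local_lipschitz {0::real} K (\<lambda>_. g)"
  proof (rule local_lipschitzI)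
    fix t x assume "t \<in> {0::real}" "x \<in> K"
    have "\<exists>e>0. \<exists>L. \<forall>a\<in>UNIV \<inter> ball x e. \<forall>b\<in>UNIV \<inter> ball x e. dist (g a) (g b) \<le> L * dist a b"
      using assms(1) unfolding loc_lipschitz_on_def by (rule bspec) simp
    then obtain e L where e: "e > 0" and L: "\<forall>a\<in>UNIV \<inter> ball x e. \<forall>b\<in>UNIV \<inter> ball x e. dist (g a) (g b) \<le> L * dist a b"
      by blast
    have "(max L 0)-lipschitz_on (cball x (e/2) \<inter> K) g"
    proof (rule lipschitz_onI)
      fix a b assume "a \<in> cball x (e/2) \<inter> K" "b \<in> cball x (e/2) \<inter> K"
      then have "a \<in> ball x e" "b \<in> ball x e" using e by auto
      then have "dist (g a) (g b) \<le> L * dist a b" using L by simp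
      also have "\<dots> \<le> max L 0 * dist a b" by (simp add: mult_right_mono)
      finally show "dist (g a) (g b) \<le> max L 0 * dist a b" .
    qed simp
    then show "\<exists>u>0. \<exists>L. \<forall>t\<in>cball t u \<inter> {0}. L-lipschitz_on (cball x u \<inter> K) g"
      using e by (intro exI[of _ "e/2"]) auto
  qed
  obtain L where "\<And>t. t \<in> {0::real} \<Longrightarrow> L-lipschitz_on K ((\<lambda>_. g) t)"
    by (rule local_lipschitz_compact_implies_lipschitz[OF ll assms(2)]) auto
  then have "L-lipschitz_on K g" by simp
  then show ?thesis using that by blast
qed



lemma mat_bound:
  fixes M :: "real^'n^'m"
  assumes "a \<le> p" "p \<le> b"
  shows "mat_pos M *v a + mat_neg M *v b \<le> M *v p" "M *v p \<le> mat_pos M *v b + mat_neg M *v a"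
proof -
  have t1: "max m 0 * (a$j) + min m 0 * (b$j) \<le> m * (p$j)" 
   and t2: "m * (p$j) \<le> max m 0 * (b$j) + min m 0 * (a$j)" for m :: real and j
  proof -
    have aj: "a$j \<le> p$j" "p$j \<le> b$j" using assms by (auto simp: less_eq_vec_def)
    show "max m 0 * (a$j) + min m 0 * (b$j) \<le> m * (p$j)"
    proof (cases "m \<ge> 0")
      case True then show ?thesis using aj by (simp add: mult_left_mono)
    next
      case False then show ?thesis using aj by (simp add: mult_left_mono_neg)
    qed
    show "m * (p$j) \<le> max m 0 * (b$j) + min m 0 * (a$j)"
    proof (cases "m \<ge> 0")
      case True then show ?thesis using aj by (simp add: mult_left_mono)
    next
      case False then show ?thesis using aj by (simp add: mult_left_mono_neg)
    qed
  qed
  show "mat_pos M *v a + mat_neg M *v b \<le> M *v p"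
    unfolding less_eq_vec_def
  proof
    fix k
    have "(mat_pos M *v a + mat_neg M *v b) $ k = (\<Sum>j\<in>UNIV. max (M$k$j) 0 * (a$j) + min (M$k$j) 0 * (b$j))"
      by (simp add: matrix_vector_mult_def mat_pos_def mat_neg_def sum.distrib)
    also have "\<dots> \<le> (\<Sum>j\<in>UNIV. M$k$j * (p$j))" by (rule sum_mono) (rule t1)
    also have "\<dots> = (M *v p) $ k" by (simp add: matrix_vector_mult_def)
    finally show "(mat_pos M *v a + mat_neg M *v b) $ k \<le> (M *v p) $ k" .
  qed
  show "M *v p \<le> mat_pos M *v b + mat_neg M *v a"
    unfolding less_eq_vec_def
  proof
    fix k
    have "(M *v p) $ k = (\<Sum>j\<in>UNIV. M$k$j * (p$j))" by (simp add: matrix_vector_mult_def)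
    also have "\<dots> \<le> (\<Sum>j\<in>UNIV. max (M$k$j) 0 * (b$j) + min (M$k$j) 0 * (a$j))" by (rule sum_mono) (rule t2)
    also have "\<dots> = (mat_pos M *v b + mat_neg M *v a) $ k"
      by (simp add: matrix_vector_mult_def mat_pos_def mat_neg_def sum.distrib)
    finally show "(M *v p) $ k \<le> (mat_pos M *v b + mat_neg M *v a) $ k" .
  qed
qed

lemma G_bounds:
  assumes nn: "nn_bounds N Al Ah bl bh" and "a \<le> ah" "a \<le> p" "p \<le> ah" "y \<le> p" "p \<le> yh"
  shows "Glo Al bl a ah y yh \<le> N p" "N p \<le> Ghi Ah bh a ah y yh"
proof -
  have nb: "Al a ah *v p + bl a ah \<le> N p" "N p \<le> Ah a ah *v p + bh a ah"
    using nn assms unfolding nn_bounds_def by auto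
  show "Glo Al bl a ah y yh \<le> N p"
  proof -
    have "Glo Al bl a ah y yh = mat_pos (Al a ah) *v y + mat_neg (Al a ah) *v yh + bl a ah"
      by (simp add: Glo_def)
    also have "\<dots> \<le> Al a ah *v p + bl a ah"
      by (rule add_right_mono[OF mat_bound(1)[OF assms(5,6)]])
    also have "\<dots> \<le> N p" by (rule nb(1))
    finally show ?thesis .
  qed
  show "N p \<le> Ghi Ah bh a ah y yh"
  proof -
    have "N p \<le> Ah a ah *v p + bh a ah" by (rule nb(2))
    also have "\<dots> \<le> mat_pos (Ah a ah) *v yh + mat_neg (Ah a ah) *v y + bh a ah"
      by (rule add_right_mono[OF mat_bound(2)[OF assms(5,6)]])
    also have "\<dots> = Ghi Ah bh a ah y yh" by (simp add: Ghi_def)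
    finally show ?thesis .
  qed
qed



lemma dec_m1: "is_decomposition f F \<Longrightarrow>
        decomp_dom x xh u uh w wh \<and> decomp_dom y yh u uh w wh \<and>
        x \<le> y \<and> x $ i = y $ i \<and> yh \<le> xh \<longrightarrow>
        F x xh u uh w wh $ i \<le> F y yh u uh w wh $ i"
  unfolding is_decomposition_def by (elim conjE allE) assumption
lemma dec_m2: "is_decomposition f F \<Longrightarrow>
        decomp_dom x xh u uh w wh \<and> decomp_dom x xh v vh w wh \<and>
        u \<le> v \<and> vh \<le> uh \<longrightarrow>
        F x xh u uh w wh $ i \<le> F x xh v vh w wh $ i"
  unfolding is_decomposition_def by (elim conjE allE) assumption
lemma dec_m3: "is_decomposition f F \<Longrightarrow>
        decomp_dom x xh u uh w wh \<and> decomp_dom x xh u uh om omh \<and>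
        w \<le> om \<and> omh \<le> wh \<longrightarrow>
        F x xh u uh w wh $ i \<le> F x xh u uh om omh $ i"
  unfolding is_decomposition_def by (elim conjE allE) assumption
lemma dec_e: "is_decomposition f F \<Longrightarrow> F x x u u w w = f x u w"
  unfolding is_decomposition_def by (elim conjE allE) assumption

lemma chain_lo:
  assumes dec: "is_decomposition f F" and "a \<le> p" "p \<le> b" "p$i = a$i"
    and "ulo \<le> u" "u \<le> uhi" "wl \<le> om" "om \<le> wh"
  shows "F a b ulo uhi wl wh $ i \<le> f p u om $ i"
proof -
  note m1 = dec_m1[OF dec] and m2 = dec_m2[OF dec] and m3 = dec_m3[OF dec] and e = dec_e[OF dec]
  have ab: "a \<le> b" "ulo \<le> uhi" "wl \<le> wh" using assms order_trans by blast+
  have "F a b ulo uhi wl wh $ i \<le> F p p ulo uhi wl wh $ i"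
    using m1[of a b ulo uhi wl wh p p i] assms ab by (auto simp: decomp_dom_def T2_def)
  also have "\<dots> \<le> F p p u u wl wh $ i"
    using m2[of p p ulo uhi wl wh u u i] assms ab by (auto simp: decomp_dom_def T2_def)
  also have "\<dots> \<le> F p p u u om om $ i"
    using m3[of p p u u wl wh om om i] assms ab by (auto simp: decomp_dom_def T2_def)
  finally show ?thesis using e by simp
qed

lemma chain_hi:
  assumes dec: "is_decomposition f F" and "a \<le> p" "p \<le> b" "p$i = b$i"
    and "ulo \<le> u" "u \<le> uhi" "wl \<le> om" "om \<le> wh"
  shows "f p u om $ i \<le> F b a uhi ulo wh wl $ i"
proof -
  note m1 = dec_m1[OF dec] and m2 = dec_m2[OF dec] and m3 = dec_m3[OF dec] and e = dec_e[OF dec]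
  have ab: "a \<le> b" "ulo \<le> uhi" "wl \<le> wh" using assms order_trans by blast+
  have "f p u om $ i = F p p u u om om $ i" using e by simp
  also have "\<dots> \<le> F p p u u wh wl $ i"
    using m3[of p p u u om om wh wl i] assms ab by (auto simp: decomp_dom_def T2_def)
  also have "\<dots> \<le> F p p uhi ulo wh wl $ i"
    using m2[of p p u u wh wl uhi ulo i] assms ab by (auto simp: decomp_dom_def T2_def)
  also have "\<dots> \<le> F b a uhi ulo wh wl $ i"
    using m1[of p p uhi ulo wh wl b a i] assms ab by (auto simp: decomp_dom_def T2_def)
  finally show ?thesis .
qed

lemma vupd_ge: "a \<le> p \<Longrightarrow> p$i = a$i \<Longrightarrow> p \<le> b \<Longrightarrow> p \<le> vupd b i a"
  by (auto simp: less_eq_vec_def vupd_def)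
lemma vupd_ge2: "a \<le> b \<Longrightarrow> a \<le> vupd b i a"
  by (auto simp: less_eq_vec_def vupd_def)
lemma vupd_le: "a \<le> p \<Longrightarrow> p$i = b$i \<Longrightarrow> p \<le> b \<Longrightarrow> vupd a i b \<le> p"
  by (auto simp: less_eq_vec_def vupd_def)
lemma vupd_le2: "a \<le> b \<Longrightarrow> vupd a i b \<le> b"
  by (auto simp: less_eq_vec_def vupd_def)

lemma emb_lo_le:
  assumes dec: "is_decomposition f F" and nn: "nn_bounds N Al Ah bl bh"
    and "a \<le> p" "p \<le> b" "p$i = a$i" "wl \<le> om" "om \<le> wh"
  shows "emb_lo F Al Ah bl bh wl wh s a b $ i \<le> f p (N p) om $ i"
proof -
  have ab: "a \<le> b" using assms order_trans by blast
  show ?thesis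
  proof (cases s)
    case EmbG
    show ?thesis unfolding EmbG emb_lo_def Hlo_def Hhi_def
      using chain_lo[OF dec assms(3,4,5) G_bounds[OF nn ab assms(3,4) assms(3,4)] assms(6,7)] by simp
  next
    case EmbH
    show ?thesis unfolding EmbH emb_lo_def
      using chain_lo[OF dec assms(3,4,5) G_bounds[OF nn ab assms(3,4) assms(3) vupd_ge[OF assms(3,5,4)]] assms(6,7)] by simp
  next
    case EmbL
    show ?thesis unfolding EmbL emb_lo_def Hlo_def Hhi_def
      using chain_lo[OF dec assms(3,4,5) G_bounds[OF nn vupd_ge2[OF ab] assms(3) vupd_ge[OF assms(3,5,4)] assms(3) vupd_ge[OF assms(3,5,4)]] assms(6,7)] by simp
  qed
qed

lemma emb_hi_ge:
  assumes dec: "is_decomposition f F" and nn: "nn_bounds N Al Ah bl bh"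
    and "a \<le> p" "p \<le> b" "p$i = b$i" "wl \<le> om" "om \<le> wh"
  shows "f p (N p) om $ i \<le> emb_hi F Al Ah bl bh wl wh s a b $ i"
proof -
  have ab: "a \<le> b" using assms order_trans by blast
  show ?thesis
  proof (cases s)
    case EmbG
    show ?thesis unfolding EmbG emb_hi_def Hlo_def Hhi_def
      using chain_hi[OF dec assms(3,4,5) G_bounds[OF nn ab assms(3,4) assms(3,4)] assms(6,7)] by simp
  next
    case EmbH
    show ?thesis unfolding EmbH emb_hi_def
      using chain_hi[OF dec assms(3,4,5) G_bounds[OF nn ab assms(3,4) vupd_le[OF assms(3,5,4)] assms(4)] assms(6,7)] by simp
  next
    case EmbL
    show ?thesis unfolding EmbL emb_hi_def Hlo_def Hhi_def
      using chain_hi[OF dec assms(3,4,5) G_bounds[OF nn vupd_le2[OF ab] vupd_le[OF assms(3,5,4)] assms(4) vupd_le[OF assms(3,5,4)] assms(4)] assms(6,7)] by simp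
  qed
qed



lemma step_lemma:
  fixes E G :: "'k::finite \<Rightarrow> real \<Rightarrow> real"
  assumes cont: "\<And>k. continuous_on {0..T} (E k)"
    and integ: "\<And>k \<tau> t. 0 \<le> \<tau> \<Longrightarrow> \<tau> \<le> t \<Longrightarrow> t \<le> T \<Longrightarrow> (G k has_integral (E k t - E k \<tau>)) {\<tau>..t}"
    and bound: "\<And>k s. 0 \<le> s \<Longrightarrow> s \<le> T \<Longrightarrow> E k s \<ge> 0 \<Longrightarrow> G k s \<le> C * (\<Sum>k'\<in>UNIV. max 0 (E k' s))"
    and C: "C \<ge> 0" and dpos: "\<delta> > 0" and dsmall: "real CARD('k) * C * \<delta> \<le> 1/2"
    and t0: "0 \<le> t0" "t0 \<le> T" and D0: "(\<Sum>k\<in>UNIV. max 0 (E k t0)) = 0"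
  shows "\<forall>t. t0 \<le> t \<and> t \<le> T \<and> t \<le> t0 + \<delta> \<longrightarrow> (\<Sum>k\<in>UNIV. max 0 (E k t)) = 0"
proof -
  define D where "D s = (\<Sum>k\<in>UNIV. max 0 (E k s))" for s
  have Dnn: "D s \<ge> 0" for s unfolding D_def by (auto intro: sum_nonneg)
  have Dcont: "continuous_on {0..T} D" unfolding D_def
    by (intro continuous_intros cont)
  have E0: "E k t0 \<le> 0" for k
  proof -
    have "\<forall>k\<in>UNIV. max 0 (E k t0) = 0"
      using D0 by (subst sum_nonneg_eq_0_iff[symmetric]) auto
    then show ?thesis by (metis UNIV_I max.cobounded2)
  qed
  define t2 where "t2 = min T (t0 + \<delta>)"
  have t02: "t0 \<le> t2" "t2 \<le> T" "t2 \<le> t0 + \<delta>" using t0 dpos unfolding t2_def by auto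
  obtain ts where ts: "ts \<in> {t0..t2}" and tsmax: "\<And>y. y \<in> {t0..t2} \<Longrightarrow> D y \<le> D ts"
  proof -
    have "continuous_on {t0..t2} D" using continuous_on_subset[OF Dcont] t0 t02 by auto
    then show ?thesis using continuous_attains_sup[of "{t0..t2}" D] t02 that by auto
  qed
  define M where "M = D ts"
  have Mnn: "M \<ge> 0" unfolding M_def by (rule Dnn)
  have comp: "max 0 (E k t) \<le> C * M * \<delta>" if t: "t \<in> {t0..t2}" for k t
  proof (cases "E k t \<le> 0")
    case True then show ?thesis using C Mnn dpos by simp
  next
    case False
    have contk: "continuous_on {a..b} (E k)" if "0 \<le> a" "b \<le> T" for a b
      by (rule continuous_on_subset[OF cont]) (use that in auto)
    have tt: "t0 \<le> t" "t \<le> T" using t t02 by auto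
    define Z where "Z = {s\<in>{t0..t}. E k s = 0}"
    have "\<exists>r. t0 \<le> r \<and> r \<le> t \<and> E k r = 0"
      using IVT'[of "E k" t0 0 t, OF E0[of k] _ tt(1) contk[OF t0(1) tt(2)]] False by auto
    then have Zne: "Z \<noteq> {}" unfolding Z_def by auto
    have Zcl: "closed Z" unfolding Z_def
      using continuous_closed_preimage_constant[OF contk[OF t0(1) tt(2)]] by auto
    have Zbd: "bdd_above Z" unfolding Z_def by (auto intro: bdd_aboveI[of _ t])
    define \<tau> where "\<tau> = Sup Z"
    have tauZ: "\<tau> \<in> Z" unfolding \<tau>_def using closed_contains_Sup[OF Zne Zbd Zcl] .
    then have tau: "t0 \<le> \<tau>" "\<tau> \<le> t" "E k \<tau> = 0" unfolding Z_def by auto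
    have nonneg: "E k s \<ge> 0" if s: "\<tau> \<le> s" "s \<le> t" for s
    proof (rule ccontr)
      assume "\<not> E k s \<ge> 0"
      then obtain r where r: "s \<le> r" "r \<le> t" "E k r = 0"
      proof -
        have "0 \<le> s" using s tau t0 by linarith
        then show ?thesis using IVT'[of "E k" s 0 t, OF _ _ s(2) contk[OF _ tt(2)]] \<open>\<not> E k s \<ge> 0\<close> False that by auto
      qed
      then have "r \<in> Z" unfolding Z_def using tau s by auto
      then have "r \<le> \<tau>" unfolding \<tau>_def using Zbd by (rule cSup_upper)
      then have "r = s" using r s by auto
      then show False using r \<open>\<not> E k s \<ge> 0\<close> by auto
    qed
    have I: "(G k has_integral (E k t - E k \<tau>)) {\<tau>..t}"
      using integ[of \<tau> t k] tau t0 t t02 by auto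
    have Ic: "((\<lambda>_. C * M) has_integral (C * M) * (t - \<tau>)) {\<tau>..t}"
      using has_integral_const_real[of "C*M" \<tau> t] tau by (simp add: mult.commute)
    have "E k t - E k \<tau> \<le> (C * M) * (t - \<tau>)"
    proof (rule has_integral_le[OF I Ic])
      fix s assume s: "s \<in> {\<tau>..t}"
      have sI: "s \<in> {t0..t2}" using s tau t by auto
      have "G k s \<le> C * D s" unfolding D_def
        using bound[of s k] nonneg[of s] s sI t0 t02 by auto
      also have "\<dots> \<le> C * M" unfolding M_def using tsmax[OF sI] C by (simp add: mult_left_mono)
      finally show "G k s \<le> C * M" .
    qed
    also have "\<dots> \<le> C * M * \<delta>"
      using tau t t02 C Mnn by (intro mult_left_mono) (auto simp: mult_nonneg_nonneg)
    finally show ?thesis using tau False by simp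
  qed
  have "M = D ts" by (simp add: M_def)
  also have "\<dots> \<le> (\<Sum>k\<in>(UNIV::'k set). C * M * \<delta>)" unfolding D_def
    by (rule sum_mono) (rule comp[OF ts])
  also have "\<dots> = real CARD('k) * C * \<delta> * M" by simp
  also have "\<dots> \<le> 1/2 * M" using dsmall Mnn by (rule mult_right_mono)
  finally have "M \<le> 0" by simp
  then have "\<forall>t\<in>{t0..t2}. D t = 0" using tsmax Dnn M_def by (metis order_antisym)
  then show ?thesis unfolding D_def t2_def by auto
qed

lemma gronwall_like:
  fixes E G :: "'k::finite \<Rightarrow> real \<Rightarrow> real"
  assumes cont: "\<And>k. continuous_on {0..T} (E k)"
    and integ: "\<And>k \<tau> t. 0 \<le> \<tau> \<Longrightarrow> \<tau> \<le> t \<Longrightarrow> t \<le> T \<Longrightarrow> (G k has_integral (E k t - E k \<tau>)) {\<tau>..t}"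
    and bound: "\<And>k s. 0 \<le> s \<Longrightarrow> s \<le> T \<Longrightarrow> E k s \<ge> 0 \<Longrightarrow> G k s \<le> C * (\<Sum>k'\<in>UNIV. max 0 (E k' s))"
    and C: "C \<ge> 0" and init: "\<And>k. E k 0 \<le> 0"
    and t: "0 \<le> t" "t \<le> T"
  shows "E k t \<le> 0"
proof -
  define \<delta> where "\<delta> = 1 / (2 * (real CARD('k) * C + 1))"
  have dpos: "\<delta> > 0" unfolding \<delta>_def
  proof -
    have "0 \<le> real CARD('k) * C" using C by simp
    then show "0 < 1 / (2 * (real CARD('k) * C + 1))" by simp
  qed
  have dsmall: "real CARD('k) * C * \<delta> \<le> 1/2"
  proof -
    have X: "0 \<le> real CARD('k) * C" using C by simp
    have "real CARD('k) * C * \<delta> = (real CARD('k) * C) / (2 * (real CARD('k) * C + 1))"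
      by (simp add: \<delta>_def)
    also have "\<dots> \<le> 1/2" using X by (simp add: divide_le_eq)
    finally show ?thesis .
  qed
  define D where "D s = (\<Sum>k\<in>UNIV. max 0 (E k s))" for s
  have ind: "\<forall>t. 0 \<le> t \<and> t \<le> T \<and> t \<le> real m * \<delta> \<longrightarrow> D t = 0" for m :: nat
  proof (induction m)
    case 0
    have "D 0 = 0" unfolding D_def using init by (simp add: max_absorb1)
    then show ?case using dpos by auto
  next
    case (Suc m)
    show ?case
    proof (intro allI impI)
      fix t assume t: "0 \<le> t \<and> t \<le> T \<and> t \<le> real (Suc m) * \<delta>"
      show "D t = 0"
      proof (cases "t \<le> real m * \<delta>")
        case True then show ?thesis using Suc t by auto
      next
        case False
        have a: "0 \<le> real m * \<delta>" "real m * \<delta> \<le> T" using False t dpos by auto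
        have "D (real m * \<delta>) = 0" using Suc a by auto
        from step_lemma[OF cont integ bound C dpos dsmall a this[unfolded D_def]]
        show ?thesis unfolding D_def using t False by (auto simp: algebra_simps)
      qed
    qed
  qed
  obtain m :: nat where "T / \<delta> \<le> real m" using real_arch_simple by blast
  then have "T \<le> real m * \<delta>" using dpos by (simp add: field_simps)
  then have "D t = 0" using ind[of m] t by auto
  then have "\<forall>k\<in>UNIV. max 0 (E k t) = 0"
    unfolding D_def by (subst sum_nonneg_eq_0_iff[symmetric]) auto
  then show ?thesis by (metis UNIV_I max.cobounded2)
qed



lemma sum_bool_prod:
  fixes h :: "bool \<times> 'n::finite \<Rightarrow> real"
  shows "(\<Sum>k\<in>UNIV. h k) = (\<Sum>j\<in>UNIV. h (True,j) + h (False,j))"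
proof -
  have "(\<Sum>k\<in>UNIV. h k) = (\<Sum>k\<in>(UNIV::bool set) \<times> (UNIV::'n set). h k)" by (simp add: UNIV_Times_UNIV)
  also have "\<dots> = (\<Sum>b\<in>UNIV. \<Sum>j\<in>UNIV. h (b,j))" by (simp add: sum.cartesian_product)
  also have "\<dots> = (\<Sum>j\<in>UNIV. h (True,j)) + (\<Sum>j\<in>UNIV. h (False,j))" by (simp add: UNIV_bool)
  also have "\<dots> = (\<Sum>j\<in>UNIV. h (True,j) + h (False,j))" by (simp add: sum.distrib)
  finally show ?thesis .
qed

lemma clamp_dist:
  fixes a b z :: "real^'n"
  assumes "a \<le> b"
  shows "dist (\<chi> j. min (b$j) (max (a$j) (z$j))) z \<le> (\<Sum>j\<in>UNIV. max 0 (a$j - z$j) + max 0 (z$j - b$j))"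
proof -
  let ?p = "\<chi> j. min (b$j) (max (a$j) (z$j))"
  have "dist ?p z = norm (?p - z)" by (simp add: dist_norm)
  also have "\<dots> \<le> (\<Sum>j\<in>UNIV. \<bar>(?p - z)$j\<bar>)" by (rule norm_le_l1_cart)
  also have "\<dots> = (\<Sum>j\<in>UNIV. max 0 (a$j - z$j) + max 0 (z$j - b$j))"
  proof (rule sum.cong)
    fix j
    have "a$j \<le> b$j" using assms by (simp add: less_eq_vec_def)
    then show "\<bar>(?p - z)$j\<bar> = max 0 (a$j - z$j) + max 0 (z$j - b$j)"
      by (simp add: max_def min_def)
  qed simp
  finally show ?thesis .
qed

lemma clamp_props:
  fixes a b z :: "real^'n"
  assumes "a \<le> b"
  shows "a \<le> (\<chi> j. min (b$j) (max (a$j) (z$j)))" "(\<chi> j. min (b$j) (max (a$j) (z$j))) \<le> b"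
    "z$i \<le> a$i \<Longrightarrow> (\<chi> j. min (b$j) (max (a$j) (z$j)))$i = a$i"
    "b$i \<le> z$i \<Longrightarrow> (\<chi> j. min (b$j) (max (a$j) (z$j)))$i = b$i"
proof -
  have ab: "a$i \<le> b$i" using assms by (simp add: less_eq_vec_def)
  show "a \<le> (\<chi> j. min (b$j) (max (a$j) (z$j)))" "(\<chi> j. min (b$j) (max (a$j) (z$j))) \<le> b"
    using assms by (auto simp: less_eq_vec_def max_def min_def)
  show "z$i \<le> a$i \<Longrightarrow> (\<chi> j. min (b$j) (max (a$j) (z$j)))$i = a$i"
    using ab by (auto simp: max_def min_def)
  show "b$i \<le> z$i \<Longrightarrow> (\<chi> j. min (b$j) (max (a$j) (z$j)))$i = b$i"
    using ab by (auto simp: max_def min_def)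
qed



lemma main_bound:
  fixes f :: "real^'n \<Rightarrow> real^'p \<Rightarrow> real^'q \<Rightarrow> real^'n"
    and N :: "real^'n \<Rightarrow> real^'p"
    and F :: "real^'n \<Rightarrow> real^'n \<Rightarrow> real^'p \<Rightarrow> real^'p \<Rightarrow> real^'q \<Rightarrow> real^'q \<Rightarrow> real^'n"
    and Al Ah :: "real^'n \<Rightarrow> real^'n \<Rightarrow> real^'n^'p"
    and bl bh :: "real^'n \<Rightarrow> real^'n \<Rightarrow> real^'p"
    and wl wh :: "real^'q"
    and sk :: emb_kind
    and xl xh xc :: "real \<Rightarrow> real^'n" and w :: "real \<Rightarrow> real^'q"
  assumes f_lip: "loc_lipschitz_on UNIV (\<lambda>(x,u,w). f x u w)"
    and N_lip: "loc_lipschitz_on UNIV N"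
    and decomp: "is_decomposition f F"
    and nn: "nn_bounds N Al Ah bl bh"
    and ode_lo: "\<forall>t\<ge>0. (xl has_vector_derivative emb_lo F Al Ah bl bh wl wh sk (xl t) (xh t)) (at t within {0..})"
    and ode_hi: "\<forall>t\<ge>0. (xh has_vector_derivative emb_hi F Al Ah bl bh wl wh sk (xl t) (xh t)) (at t within {0..})"
    and ordered: "\<forall>t\<ge>0. xl t \<le> xh t"
    and xcc: "continuous_on {0..} xc"
    and xci: "\<forall>t\<ge>0. ((\<lambda>s. f (xc s) (N (xc s)) (w s)) has_integral (xc t - xc 0)) {0..t}"
    and wb: "\<forall>s\<ge>0. wl \<le> w s \<and> w s \<le> wh"
    and init: "xl 0 \<le> xc 0" "xc 0 \<le> xh 0"
    and T: "T \<ge> 0"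
  shows "xl T \<le> xc T \<and> xc T \<le> xh T"
proof -
  define \<phi> where "\<phi> s = f (xc s) (N (xc s)) (w s)" for s
  define glo where "glo s = emb_lo F Al Ah bl bh wl wh sk (xl s) (xh s)" for s
  define ghi where "ghi s = emb_hi F Al Ah bl bh wl wh sk (xl s) (xh s)" for s
  define E where "E k \<tau> = (if fst k then xl \<tau> $ snd k - xc \<tau> $ snd k else xc \<tau> $ snd k - xh \<tau> $ snd k)"
    for k :: "bool \<times> 'n" and \<tau>
  define G where "G k \<tau> = (if fst k then glo \<tau> $ snd k - \<phi> \<tau> $ snd k else \<phi> \<tau> $ snd k - ghi \<tau> $ snd k)"
    for k :: "bool \<times> 'n" and \<tau>
  have contl: "continuous_on {0..} xl"
    by (rule continuous_on_vector_derivative[where f'="\<lambda>t. emb_lo F Al Ah bl bh wl wh sk (xl t) (xh t)"]) (use ode_lo in auto)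
  have conth: "continuous_on {0..} xh"
    by (rule continuous_on_vector_derivative[where f'="\<lambda>t. emb_hi F Al Ah bl bh wl wh sk (xl t) (xh t)"]) (use ode_hi in auto)
  have contT: "continuous_on {0..T} xl" "continuous_on {0..T} xh" "continuous_on {0..T} xc"
    using continuous_on_subset[OF contl] continuous_on_subset[OF conth] continuous_on_subset[OF xcc]
    by auto
  have contE: "continuous_on {0..T} (E k)" for k
  proof (cases "fst k")
    case True
    then have "E k = (\<lambda>\<tau>. xl \<tau> $ snd k - xc \<tau> $ snd k)" by (simp add: E_def fun_eq_iff)
    then show ?thesis by (simp only:) (intro continuous_on_diff continuous_on_component contT)
  next
    case False
    then have "E k = (\<lambda>\<tau>. xc \<tau> $ snd k - xh \<tau> $ snd k)" by (simp add: E_def fun_eq_iff)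
    then show ?thesis by (simp only:) (intro continuous_on_diff continuous_on_component contT)
  qed
  have Ilo: "(glo has_integral (xl b - xl a)) {a..b}" if "0 \<le> a" "a \<le> b" for a b
    unfolding glo_def
    by (rule fundamental_theorem_of_calculus[OF that(2)])
       (rule has_vector_derivative_within_subset[of _ _ _ "{0..}"], use ode_lo that in auto)
  have Ihi: "(ghi has_integral (xh b - xh a)) {a..b}" if "0 \<le> a" "a \<le> b" for a b
    unfolding ghi_def
    by (rule fundamental_theorem_of_calculus[OF that(2)])
       (rule has_vector_derivative_within_subset[of _ _ _ "{0..}"], use ode_hi that in auto)
  have Iphi: "(\<phi> has_integral (xc b - xc a)) {a..b}" if "0 \<le> a" "a \<le> b" for a b
  proof -
    have h1: "(\<phi> has_integral (xc a - xc 0)) {0..a}" using xci that unfolding \<phi>_def by auto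
    have h2: "(\<phi> has_integral (xc b - xc 0)) {0..b}" using xci that unfolding \<phi>_def by auto
    have "\<phi> integrable_on {a..b}"
      using integrable_subinterval_real[OF has_integral_integrable[OF h2]] that by auto
    then have h3: "(\<phi> has_integral integral {a..b} \<phi>) {a..b}" by (rule integrable_integral)
    have "(\<phi> has_integral (xc a - xc 0) + integral {a..b} \<phi>) {0..b}"
      by (rule has_integral_combine[OF that h1 h3])
    then have "(xc a - xc 0) + integral {a..b} \<phi> = xc b - xc 0"
      using h2 has_integral_unique by blast
    then have "integral {a..b} \<phi> = xc b - xc a" by (simp add: algebra_simps)
    then show ?thesis using h3 by simp
  qed
  have integ: "(G k has_integral (E k b - E k a)) {a..b}" if "0 \<le> a" "a \<le> b" "b \<le> T" for k a b
  proof (cases "fst k")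
    case True
    have "((\<lambda>v. v $ snd k) \<circ> (\<lambda>s. glo s - \<phi> s) has_integral ((xl b - xl a) - (xc b - xc a)) $ snd k) {a..b}"
      by (rule has_integral_linear[OF has_integral_diff[OF Ilo[OF that(1,2)] Iphi[OF that(1,2)]]]) auto
    then show ?thesis unfolding G_def E_def using True by (simp add: o_def algebra_simps)
  next
    case False
    have "((\<lambda>v. v $ snd k) \<circ> (\<lambda>s. \<phi> s - ghi s) has_integral ((xc b - xc a) - (xh b - xh a)) $ snd k) {a..b}"
      by (rule has_integral_linear[OF has_integral_diff[OF Iphi[OF that(1,2)] Ihi[OF that(1,2)]]]) auto
    then show ?thesis unfolding G_def E_def using False by (simp add: o_def algebra_simps)
  qed
  have E0: "E k 0 \<le> 0" for k
    using init unfolding E_def by (auto simp: less_eq_vec_def)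
  define S where "S = xl ` {0..T} \<union> xh ` {0..T} \<union> xc ` {0..T}"
  have "compact S" unfolding S_def
    by (intro compact_Un compact_continuous_image contT compact_Icc)
  from compact_imp_bounded[OF this] obtain a where Sa: "S \<subseteq> cbox (-a) a"
    by (rule bounded_subset_cbox_symmetric)
  define B where "B = cbox (-a) a"
  have inB: "p \<in> B" if "0 \<le> s" "s \<le> T" "xl s \<le> p" "p \<le> xh s" for s p
  proof -
    have "xl s \<in> S" "xh s \<in> S" using that unfolding S_def by auto
    then have "xl s \<in> {-a..a}" "xh s \<in> {-a..a}" using Sa unfolding interval_cbox_cart by blast+
    then have "-a \<le> xl s" "xh s \<le> a" by simp_all
    then have "-a \<le> p" "p \<le> a" using that order_trans by blast+
    then show ?thesis unfolding B_def interval_cbox_cart[symmetric] by simp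
  qed
  have xcB: "xc s \<in> B" if "0 \<le> s" "s \<le> T" for s
  proof -
    have "xc s \<in> S" using that unfolding S_def by auto
    then show ?thesis using Sa unfolding B_def by blast
  qed
  obtain LN where LN: "LN-lipschitz_on B N"
    unfolding B_def by (rule loc_lip_compact[OF N_lip compact_cbox])
  have Ncont: "continuous_on B N" using LN by (rule lipschitz_on_continuous_on)
  define K where "K = B \<times> (N ` B \<times> cbox wl wh)"
  have cK: "compact K" unfolding K_def B_def
    using Ncont unfolding B_def
    by (intro compact_Times compact_continuous_image compact_cbox) auto
  obtain Lf where Lf: "Lf-lipschitz_on K (\<lambda>(x,u,w). f x u w)"
    by (rule loc_lip_compact[OF f_lip cK])
  have LNn: "LN \<ge> 0" using LN by (rule lipschitz_on_nonneg)
  have Lfn: "Lf \<ge> 0" using Lf by (rule lipschitz_on_nonneg)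
  define C where "C = Lf * (1 + LN)"
  have Cn: "C \<ge> 0" unfolding C_def using LNn Lfn by simp
  have lip: "dist (f p (N p) om) (f z (N z) om) \<le> C * dist p z"
    if "p \<in> B" "z \<in> B" "wl \<le> om" "om \<le> wh" for p z om
  proof -
    have om: "om \<in> cbox wl wh" using that unfolding interval_cbox_cart[symmetric] by auto
    have "dist (f p (N p) om) (f z (N z) om) \<le> Lf * dist (p, N p, om) (z, N z, om)"
      using lipschitz_onD[OF Lf, of "(p, N p, om)" "(z, N z, om)"] that om unfolding K_def by auto
    also have "dist (p, N p, om) (z, N z, om) \<le> dist p z + dist (N p) (N z)"
      by (simp add: dist_Pair_Pair sqrt_sum_squares_le_sum)
    also have "dist (N p) (N z) \<le> LN * dist p z" using lipschitz_onD[OF LN that(1,2)] .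
    finally have "dist (f p (N p) om) (f z (N z) om) \<le> Lf * (dist p z + LN * dist p z)"
      using Lfn by (simp add: mult_left_mono)
    also have "\<dots> = C * dist p z" unfolding C_def by (simp add: algebra_simps)
    finally show ?thesis .
  qed
  have bound: "G k s \<le> C * (\<Sum>k'\<in>UNIV. max 0 (E k' s))" if s: "0 \<le> s" "s \<le> T" "E k s \<ge> 0" for k s
  proof -
    obtain b i where k: "k = (b, i)" by (cases k) blast
    define p where "p = (\<chi> j. min (xh s$j) (max (xl s$j) (xc s$j)))"
    have ord: "xl s \<le> xh s" using ordered s by auto
    have pb: "xl s \<le> p" "p \<le> xh s" unfolding p_def using clamp_props[OF ord] by auto
    have wbs: "wl \<le> w s" "w s \<le> wh" using wb s by auto
    have sumE: "(\<Sum>k'\<in>UNIV. max 0 (E k' s)) = (\<Sum>j\<in>UNIV. max 0 (xl s$j - xc s$j) + max 0 (xc s$j - xh s$j))"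
      by (subst sum_bool_prod) (simp add: E_def)
    have dp: "dist p (xc s) \<le> (\<Sum>k'\<in>UNIV. max 0 (E k' s))"
      unfolding sumE p_def by (rule clamp_dist[OF ord])
    have L: "dist (f p (N p) (w s)) (\<phi> s) \<le> C * dist p (xc s)"
      unfolding \<phi>_def by (rule lip[OF inB[OF s(1,2) pb] xcB[OF s(1,2)] wbs])
    have comp: "\<bar>(f p (N p) (w s) - \<phi> s) $ i\<bar> \<le> C * (\<Sum>k'\<in>UNIV. max 0 (E k' s))"
    proof -
      have "\<bar>(f p (N p) (w s) - \<phi> s) $ i\<bar> \<le> norm (f p (N p) (w s) - \<phi> s)"
        by (rule component_le_norm_cart)
      also have "\<dots> = dist (f p (N p) (w s)) (\<phi> s)" by (simp add: dist_norm)
      also have "\<dots> \<le> C * dist p (xc s)" by (rule L)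
      also have "\<dots> \<le> C * (\<Sum>k'\<in>UNIV. max 0 (E k' s))" by (rule mult_left_mono[OF dp Cn])
      finally show ?thesis .
    qed
    show ?thesis
    proof (cases b)
      case True
      have "xc s $ i \<le> xl s $ i" using s(3) True unfolding E_def k by simp
      then have "p $ i = xl s $ i" unfolding p_def using clamp_props(3)[OF ord] by simp
      then have "glo s $ i \<le> f p (N p) (w s) $ i"
        unfolding glo_def by (rule emb_lo_le[OF decomp nn pb _ wbs])
      then show ?thesis unfolding G_def k using True comp by simp
    next
      case False
      have "xh s $ i \<le> xc s $ i" using s(3) False unfolding E_def k by simp
      then have "p $ i = xh s $ i" unfolding p_def using clamp_props(4)[OF ord] by simp
      then have "f p (N p) (w s) $ i \<le> ghi s $ i"
        unfolding ghi_def by (rule emb_hi_ge[OF decomp nn pb _ wbs])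
      then show ?thesis unfolding G_def k using False comp by simp
    qed
  qed
  have ET: "E k T \<le> 0" for k
    by (rule gronwall_like[of T E G C, OF contE integ bound Cn E0]) (use T in auto)
  have lo: "xl T $ i \<le> xc T $ i" for i using ET[of "(True, i)"] unfolding E_def by simp
  have hi: "xc T $ i \<le> xh T $ i" for i using ET[of "(False, i)"] unfolding E_def by simp
  show ?thesis using lo hi unfolding less_eq_vec_def by blast
qed


theorem theorem2:
  fixes f :: "real^'n \<Rightarrow> real^'p \<Rightarrow> real^'q \<Rightarrow> real^'n"
    and N :: "real^'n \<Rightarrow> real^'p"
    and F :: "real^'n \<Rightarrow> real^'n \<Rightarrow> real^'p \<Rightarrow> real^'p \<Rightarrow> real^'q \<Rightarrow> real^'q \<Rightarrow> real^'n"
    and Al Ah :: "real^'n \<Rightarrow> real^'n \<Rightarrow> real^'n^'p"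
    and bl bh :: "real^'n \<Rightarrow> real^'n \<Rightarrow> real^'p"
    and X0 :: "(real^'n) set" and W :: "(real^'q) set"
    and x0l x0h :: "real^'n" and wl wh :: "real^'q"
    and s :: emb_kind
    and xl xh :: "real \<Rightarrow> real^'n"
  assumes f_lip: "loc_lipschitz_on UNIV (\<lambda>(x,u,w). f x u w)"
    and N_lip: "loc_lipschitz_on UNIV N"
    and X0: "X0 \<subseteq> {x0l..x0h}"
    and W: "W \<subseteq> {wl..wh}"
    and decomp: "is_decomposition f F"
    and nn: "nn_bounds N Al Ah bl bh"
    and init: "xl 0 = x0l" "xh 0 = x0h"
    and ode_lo: "\<forall>t\<ge>0. (xl has_vector_derivative emb_lo F Al Ah bl bh wl wh s (xl t) (xh t)) (at t within {0..})"
    and ode_hi: "\<forall>t\<ge>0. (xh has_vector_derivative emb_hi F Al Ah bl bh wl wh s (xl t) (xh t)) (at t within {0..})"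
    and ordered: "\<forall>t\<ge>0. xl t \<le> xh t"
  shows "\<forall>t\<ge>0. reach_set f N t X0 W \<subseteq> {xl t..xh t}"
  proof (intro allI impI subsetI)
  fix t y assume t: "t \<ge> 0" and y: "y \<in> reach_set f N t X0 W"
  then obtain xc x0 w where yx: "y = xc t" and x0: "x0 \<in> X0" and wW: "\<forall>s\<ge>0. w s \<in> W"
      and tr: "cl_traj f N w x0 xc"
    unfolding reach_set_def by blast
  from tr have xc0: "xc 0 = x0" and xcc: "continuous_on {0..} xc"
    and xci: "\<forall>t\<ge>0. ((\<lambda>s. f (xc s) (N (xc s)) (w s)) has_integral (xc t - x0)) {0..t}"
    unfolding cl_traj_def by auto
  have xci': "\<forall>t\<ge>0. ((\<lambda>s. f (xc s) (N (xc s)) (w s)) has_integral (xc t - xc 0)) {0..t}"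
    using xci xc0 by simp
  have wb: "\<forall>s\<ge>0. wl \<le> w s \<and> w s \<le> wh" using wW W by auto
  have i1: "xl 0 \<le> xc 0" "xc 0 \<le> xh 0" using X0 x0 xc0 init by auto
  have "xl t \<le> xc t \<and> xc t \<le> xh t"
    by (rule main_bound[OF f_lip N_lip decomp nn ode_lo ode_hi ordered xcc xci' wb i1 t])
  then show "y \<in> {xl t..xh t}" using yx by simp
qed

end
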